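(* The augmentation homomorphism $\varepsilon_1:\Lambda(\mathbb{Q}\mathrm{Tree})\to L_0$ has no splitting preserving the units; that is, there is no Lie algebra homomorphism $s:L_0\to\Lambda(\mathbb{Q}\mathrm{Tree})$ with $\varepsilon_1\circ s=\mathrm{id}_{L_0}$ and $s\left(x\frac{d}{dx}\right)=1\in\mathrm{Tree}((1))$.
   Context: $\mathrm{Tree}((m))$, $m\ge1$, is the set of planar rooted trees with one root at the bottom and $m$ leaves at the top labeled $1,\dots,m$ from left to right, every internal vertex having at least two inputs; equivalently, meaningful ways of inserting parentheses into the word $12\cdots m$ (e.g. $\mathrm{Tree}((3))=\{((12)3),(1(23)),(123)\}$). Composition $S\circ_iT$ grafts the root of $T$ to the $i$-th leaf of $S$, making $\mathrm{Tree}$ a nonsymmetric operad of sets with unit the trivial tree $1\in\mathrm{Tree}((1))$. $\Lambda(\mathbb{Q}\mathrm{Tree})=\bigoplus_{m\ge1}\mathbb{Q}\mathrm{Tree}((m))$ with Lie bracket $[c,d]=\sum_{t=1}^{j}d\circ_tc-\sum_{s=1}^{k}c\circ_sd$ for $c\in\mathrm{Tree}((k))$, $d\in\mathrm{Tree}((j))$, extended bilinearly. $L_0=x\mathbb{Q}[x]\frac{d}{dx}$ is the Lie algebra of polynomial vector fields on the line vanishing at $0$. The augmentation $\varepsilon_1$ is the (surjective) Lie algebra homomorphism sending every tree in $\mathrm{Tree}((m))$ to $x^m\frac{d}{dx}$. *)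

theory Defs
  imports "HOL-Computational_Algebra.Polynomial"
begin

datatype ptree = Leaf | Node "ptree list"

primrec wf_tree :: "ptree \<Rightarrow> bool" and wf_trees :: "ptree list \<Rightarrow> bool" where
  "wf_tree Leaf = True"
| "wf_tree (Node ts) = (2 \<le> length ts \<and> wf_trees ts)"
| "wf_trees [] = True"
| "wf_trees (t # ts) = (wf_tree t \<and> wf_trees ts)"

primrec leaves :: "ptree \<Rightarrow> nat" and leaves_list :: "ptree list \<Rightarrow> nat" where
  "leaves Leaf = 1"
| "leaves (Node ts) = leaves_list ts"
| "leaves_list [] = 0"
| "leaves_list (t # ts) = leaves t + leaves_list ts"

text \<open>\<open>graft0 S i T\<close>: graft the root of T onto the leaf of S with 0-based index i (left to right).\<close>
fun graft0 :: "ptree \<Rightarrow> nat \<Rightarrow> ptree \<Rightarrow> ptree"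
  and graft_list :: "ptree list \<Rightarrow> nat \<Rightarrow> ptree \<Rightarrow> ptree list" where
  "graft0 Leaf i T = (if i = 0 then T else Leaf)"
| "graft0 (Node ts) i T = Node (graft_list ts i T)"
| "graft_list [] i T = []"
| "graft_list (t # ts) i T =
     (if i < leaves t then graft0 t i T # ts else t # graft_list ts (i - leaves t) T)"

text \<open>Operadic composition \<open>S \<circ>\<^sub>i T\<close> with 1-based leaf index i.\<close>
definition ocomp :: "ptree \<Rightarrow> nat \<Rightarrow> ptree \<Rightarrow> ptree" where
  "ocomp S i T = graft0 S (i - 1) T"

text \<open>Elements of \<open>\<Lambda>(\<bbbQ>Tree)\<close>: finitely supported rational functions on well-formed trees.\<close>
definition supp :: "(ptree \<Rightarrow> rat) \<Rightarrow> ptree set" where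
  "supp c = {t. c t \<noteq> 0}"

definition LamQTree :: "(ptree \<Rightarrow> rat) set" where
  "LamQTree = {c. finite (supp c) \<and> (\<forall>t\<in>supp c. wf_tree t)}"

definition basis :: "ptree \<Rightarrow> ptree \<Rightarrow> rat" where
  "basis t = (\<lambda>u. if u = t then 1 else 0)"

definition tree_br :: "ptree \<Rightarrow> ptree \<Rightarrow> ptree \<Rightarrow> rat" where
  "tree_br c d = (\<lambda>u. (\<Sum>t\<in>{1..leaves d}. basis (ocomp d t c) u)
                     - (\<Sum>s\<in>{1..leaves c}. basis (ocomp c s d) u))"

definition lam_br :: "(ptree \<Rightarrow> rat) \<Rightarrow> (ptree \<Rightarrow> rat) \<Rightarrow> ptree \<Rightarrow> rat" where
  "lam_br c d = (\<lambda>u. \<Sum>S\<in>supp c. \<Sum>T\<in>supp d. c S * d T * tree_br S T u)"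

text \<open>\<open>L\<^sub>0\<close>: a polynomial p with p(0)=0 represents the vector field p(x) d/dx.\<close>
definition L0 :: "rat poly set" where
  "L0 = {p. poly p 0 = 0}"

text \<open>[f d/dx, g d/dx] = (f g' - g f') d/dx.\<close>
definition vf_br :: "rat poly \<Rightarrow> rat poly \<Rightarrow> rat poly" where
  "vf_br f g = f * pderiv g - g * pderiv f"

definition eps1 :: "(ptree \<Rightarrow> rat) \<Rightarrow> rat poly" where
  "eps1 c = (\<Sum>t\<in>supp c. monom (c t) (leaves t))"

end

theory Submission
  imports Defs
begin


definition rep :: "(ptree \<times> rat) list \<Rightarrow> ptree \<Rightarrow> rat" where
  "rep xs = (\<lambda>u. \<Sum>x\<leftarrow>xs. if fst x = u then snd x else 0)"

lemma rep_simps[simp]: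
  "rep [] u = 0"
  "rep (x # xs) u = (if fst x = u then snd x else 0) + rep xs u"
  "rep (xs @ ys) u = rep xs u + rep ys u"
  by (simp_all add: rep_def)

definition tbl :: "ptree \<Rightarrow> ptree \<Rightarrow> (ptree \<times> rat) list" where
  "tbl c d = map (\<lambda>t. (ocomp d t c, 1)) [1..<leaves d + 1]
           @ map (\<lambda>s. (ocomp c s d, -1)) [1..<leaves c + 1]"

lemma rep_map_const: "rep (map (\<lambda>t. (f t, k)) xs) u = (\<Sum>t\<leftarrow>xs. if f t = u then k else 0)"
  by (induction xs) auto

lemma sum_list_upt_sum: "(\<Sum>t\<leftarrow>[1..<n + 1]. g t) = (\<Sum>t\<in>{1..n}. (g t :: rat))"
proof -
  have "(\<Sum>t\<leftarrow>[1..<n + 1]. g t) = sum g (set [1..<n+1])"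
    by (simp add: sum_list_distinct_conv_sum_set)
  also have "set [1..<n+1] = {1..n}" by auto
  finally show ?thesis .
qed

lemma tree_br_rep: "tree_br c d u = rep (tbl c d) u"
proof -
  have "rep (tbl c d) u = (\<Sum>t\<leftarrow>[1..<leaves d + 1]. if ocomp d t c = u then 1 else 0)
     + (\<Sum>t\<leftarrow>[1..<leaves c + 1]. if ocomp c t d = u then -1 else 0)"
    unfolding tbl_def by (simp add: rep_map_const)
  also have "\<dots> = (\<Sum>t\<in>{1..leaves d}. basis (ocomp d t c) u) - (\<Sum>s\<in>{1..leaves c}. basis (ocomp c s d) u)"
  proof -
    have neg: "(if P then -1 else (0::rat)) = - (if P then 1 else 0)" for P by simp
    have sy: "(ocomp a b e = u) = (u = ocomp a b e)" for a b e by auto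
    show ?thesis unfolding sum_list_upt_sum basis_def neg sum_negf sy by simp
  qed
  finally show ?thesis unfolding tree_br_def by simp
qed

lemma lam_br_super:
  assumes "finite P" "supp c \<subseteq> P" "finite Q" "supp d \<subseteq> Q"
  shows "lam_br c d u = (\<Sum>S\<in>P. \<Sum>T\<in>Q. c S * d T * tree_br S T u)"
proof -
  have i: "(\<Sum>T\<in>supp d. c S * d T * tree_br S T u) = (\<Sum>T\<in>Q. c S * d T * tree_br S T u)" for S
    by (rule sum.mono_neutral_left) (use assms in \<open>auto simp: supp_def\<close>)
  have "lam_br c d u = (\<Sum>S\<in>supp c. \<Sum>T\<in>Q. c S * d T * tree_br S T u)"
    unfolding lam_br_def i ..
  also have "\<dots> = (\<Sum>S\<in>P. \<Sum>T\<in>Q. c S * d T * tree_br S T u)"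
    by (rule sum.mono_neutral_left) (use assms in \<open>auto simp: supp_def\<close>)
  finally show ?thesis .
qed

lemma supp_rep: "supp (rep xs) \<subseteq> set (map fst xs)"
proof (induction xs)
  case Nil then show ?case by (simp add: supp_def)
next
  case (Cons x xs) then show ?case by (auto simp: supp_def)
qed

lemma sum_rep:
  assumes "finite P" "set (map fst xs) \<subseteq> P"
  shows "(\<Sum>S\<in>P. rep xs S * g S) = (\<Sum>x\<leftarrow>xs. snd x * g (fst x))"
  using assms(2)
proof (induction xs)
  case Nil then show ?case by simp
next
  case (Cons x xs)
  have "(\<Sum>S\<in>P. rep (x # xs) S * g S) = (\<Sum>S\<in>P. (if fst x = S then snd x * g S else 0)) + (\<Sum>S\<in>P. rep xs S * g S)"
    by (auto simp: ring_distribs sum.distrib[symmetric] intro!: sum.cong)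
  also have "(\<Sum>S\<in>P. (if fst x = S then snd x * g S else 0)) = snd x * g (fst x)"
    using Cons.prems assms(1) by (simp add: sum.delta)
  finally show ?case using Cons by simp
qed

definition fbr :: "(ptree \<times> rat) list \<Rightarrow> (ptree \<times> rat) list \<Rightarrow> (ptree \<times> rat) list" where
  "fbr xs ys = concat (map (\<lambda>x. concat (map (\<lambda>y. map (\<lambda>v. (fst v, snd x * snd y * snd v)) (tbl (fst x) (fst y))) ys)) xs)"

lemma rep_scale: "rep (map (\<lambda>v. (fst v, r * snd v)) zs) u = r * rep zs u"
  by (induction zs) (auto simp: algebra_simps)

lemma rep_concat: "rep (concat zss) u = (\<Sum>zs\<leftarrow>zss. rep zs u)"
  by (induction zss) auto

lemma lam_br_rep: "lam_br (rep xs) (rep ys) = rep (fbr xs ys)"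
proof
  fix u
  have "lam_br (rep xs) (rep ys) u = (\<Sum>S\<in>set (map fst xs). \<Sum>T\<in>set (map fst ys). rep xs S * rep ys T * tree_br S T u)"
    by (rule lam_br_super) (use supp_rep[of xs] supp_rep[of ys] in auto)
  also have "\<dots> = (\<Sum>S\<in>set (map fst xs). rep xs S * (\<Sum>T\<in>set (map fst ys). rep ys T * tree_br S T u))"
    by (simp add: sum_distrib_left mult.assoc)
  also have "\<dots> = (\<Sum>x\<leftarrow>xs. snd x * (\<Sum>T\<in>set (map fst ys). rep ys T * tree_br (fst x) T u))"
    by (rule sum_rep) auto
  also have "\<dots> = (\<Sum>x\<leftarrow>xs. snd x * (\<Sum>y\<leftarrow>ys. snd y * tree_br (fst x) (fst y) u))"
    by (subst sum_rep) auto
  also have "\<dots> = rep (fbr xs ys) u"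
    unfolding fbr_def rep_concat map_map o_def
    by (simp add: rep_scale[of "snd x * snd y" for x y, simplified mult.assoc[symmetric]] tree_br_rep)
       (simp add: sum_list_const_mult[symmetric] mult.assoc)
  finally show "lam_br (rep xs) (rep ys) u = rep (fbr xs ys) u" .
qed


abbreviation "N2 \<equiv> Node [Leaf, Leaf]"
abbreviation "TA \<equiv> Node [N2, Leaf]"
abbreviation "TB \<equiv> Node [Leaf, N2]"
abbreviation "TC \<equiv> Node [Leaf, Leaf, Leaf]"
abbreviation "U1 \<equiv> Node [Node [N2, Node [Leaf, N2]], Leaf]"
abbreviation "U2 \<equiv> Node [Leaf, Node [Node [N2, Leaf], N2]]"
abbreviation "U3 \<equiv> Node [N2, N2, N2]"

definition "hlf zs = map (\<lambda>v. (fst v, (1/2) * snd v)) zs"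

abbreviation "xs3 a b c \<equiv> [(TA,a),(TB,b),(TC,c)]"

lemma compU1:
  fixes a b c :: rat
  assumes "3 * rep (fbr (xs3 a b c) (fbr [(N2,1)] (xs3 a b c))) U1 = rep (fbr [(N2,1)] (hlf (fbr [(N2,1)] (fbr [(N2,1)] (xs3 a b c))))) U1"
  shows "b = 0"
  using assms unfolding hlf_def fbr_def tbl_def ocomp_def
  by (simp add: algebra_simps)

lemma compU2:
  fixes a b c :: rat
  assumes "3 * rep (fbr (xs3 a b c) (fbr [(N2,1)] (xs3 a b c))) U2 = rep (fbr [(N2,1)] (hlf (fbr [(N2,1)] (fbr [(N2,1)] (xs3 a b c))))) U2"
  shows "a = 0"
  using assms unfolding hlf_def fbr_def tbl_def ocomp_def
  by (simp add: algebra_simps)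

lemma compU3:
  fixes a b c :: rat
  assumes "3 * rep (fbr (xs3 a b c) (fbr [(N2,1)] (xs3 a b c))) U3 = rep (fbr [(N2,1)] (hlf (fbr [(N2,1)] (fbr [(N2,1)] (xs3 a b c))))) U3"
  shows "c = 0"
  using assms unfolding hlf_def fbr_def tbl_def ocomp_def
  by (simp add: algebra_simps)


lemma graft_Leaf:
  "T = Leaf \<Longrightarrow> graft0 t i T = t"
  "T = Leaf \<Longrightarrow> graft_list ts i T = ts"
  by (induction t i T and ts i T rule: graft0_graft_list.induct) auto

lemma tree_br_Leaf: "tree_br Leaf T u = (of_nat (leaves T) - 1) * basis T u"
proof -
  have "(\<Sum>t\<in>{1..leaves T}. basis (ocomp T t Leaf) u) = of_nat (leaves T) * basis T u"
    by (simp add: ocomp_def graft_Leaf)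
  moreover have "(\<Sum>s\<in>{1..leaves Leaf}. basis (ocomp Leaf s T) u) = basis T u"
    by (simp add: ocomp_def)
  ultimately show ?thesis unfolding tree_br_def by (simp add: algebra_simps)
qed

lemma lam_br_unit:
  assumes "c \<in> LamQTree"
  shows "lam_br (basis Leaf) c u = (of_nat (leaves u) - 1) * c u"
proof -
  have fin: "finite (supp c)" using assms by (simp add: LamQTree_def)
  have "lam_br (basis Leaf) c u = (\<Sum>S\<in>{Leaf}. \<Sum>T\<in>supp c. basis Leaf S * c T * tree_br S T u)"
    by (rule lam_br_super) (use fin in \<open>auto simp: supp_def basis_def\<close>)
  also have "\<dots> = (\<Sum>T\<in>supp c. (if T = u then c T * (of_nat (leaves T) - 1) else 0))"
    by (auto simp: tree_br_Leaf basis_def intro!: sum.cong)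
  also have "\<dots> = (of_nat (leaves u) - 1) * c u"
    using fin by (simp add: sum.delta' supp_def)
  finally show ?thesis .
qed

lemma vf_br_monom:
  assumes "1 \<le> m" "1 \<le> n"
  shows "vf_br (monom (1::rat) m) (monom 1 n) = smult (of_nat n - of_nat m) (monom 1 (m + n - 1))"
proof -
  have "m + (n - 1) = m + n - 1" "n + (m - 1) = m + n - 1" using assms by auto
  then show ?thesis
    by (simp add: vf_br_def pderiv_monom mult_monom smult_monom poly_eq_iff coeff_monom algebra_simps)
qed

lemma monom_L0: "1 \<le> n \<Longrightarrow> monom (1::rat) n \<in> L0"
  by (simp add: L0_def poly_monom)

lemma monom_one_one: "monom (1::rat) 1 = [:0, 1:]"
  by (simp add: monom_Suc)

lemma coeff_eps1:
  "coeff (eps1 c) n = (\<Sum>t\<in>supp c. if leaves t = n then c t else 0)"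
  by (auto simp: eps1_def coeff_sum coeff_monom intro!: sum.cong)

lemma wf_trees_all: "wf_trees ts = (\<forall>x\<in>set ts. wf_tree x)"
  by (induction ts) auto

lemma leaves_list_sum: "leaves_list ts = sum_list (map leaves ts)"
  by (induction ts) auto

lemma leaves_pos: "wf_tree t \<Longrightarrow> 1 \<le> leaves t"
proof (induction t)
  case Leaf then show ?case by simp
next
  case (Node ts)
  then obtain t1 r where ts: "ts = t1 # r" by (cases ts) auto
  have "1 \<le> leaves t1" using Node.IH[of t1] Node.prems ts by simp
  then show ?case using ts by simp
qed

lemma leaves_list_len: "wf_trees ts \<Longrightarrow> length ts \<le> leaves_list ts"
  by (induction ts) (auto dest: leaves_pos)

lemma leaves_one: "wf_tree t \<Longrightarrow> leaves t = 1 \<Longrightarrow> t = Leaf"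
proof (cases t)
  case (Node ts)
  assume "wf_tree t" "leaves t = 1"
  then obtain t1 t2 r where "ts = t1 # t2 # r" using Node
    by (metis One_nat_def Suc_1 Suc_le_length_iff le_Suc_eq wf_tree.simps(2))
  then show ?thesis using Node \<open>wf_tree t\<close> \<open>leaves t = 1\<close>
    by (auto dest!: leaves_pos)
qed simp

lemma len2: "2 \<le> length ts \<Longrightarrow> \<exists>t1 t2 r. ts = t1 # t2 # r"
  by (auto simp: Suc_le_length_iff numeral_2_eq_2)

lemma leaves_two: "wf_tree t \<Longrightarrow> leaves t = 2 \<Longrightarrow> t = N2"
proof (cases t)
  case (Node ts)
  assume w: "wf_tree t" and l: "leaves t = 2"
  then obtain t1 t2 r where ts: "ts = t1 # t2 # r" using Node
    using len2 by fastforce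
  have w1: "wf_tree t1" "wf_tree t2" "wf_trees r" using w Node ts by auto
  have "leaves t1 + leaves t2 + leaves_list r = 2" using l Node ts by simp
  moreover note leaves_pos[OF w1(1)] leaves_pos[OF w1(2)] leaves_list_len[OF w1(3)]
  ultimately have "leaves t1 = 1" "leaves t2 = 1" "length r = 0" by linarith+
  then show ?thesis using Node ts w1 leaves_one by auto
qed simp

lemma leaves_three: "wf_tree t \<Longrightarrow> leaves t = 3 \<Longrightarrow> t = TA \<or> t = TB \<or> t = TC"
proof (cases t)
  case (Node ts)
  assume w: "wf_tree t" and l: "leaves t = 3"
  then obtain t1 t2 r where ts: "ts = t1 # t2 # r" using Node
    using len2 by fastforce
  have w1: "wf_tree t1" "wf_tree t2" "wf_trees r" using w Node ts by auto
  have s: "leaves t1 + leaves t2 + leaves_list r = 3" using l Node ts by simp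
  note p = leaves_pos[OF w1(1)] leaves_pos[OF w1(2)] leaves_list_len[OF w1(3)]
  show ?thesis
  proof (cases r)
    case Nil
    then have "(leaves t1 = 1 \<and> leaves t2 = 2) \<or> (leaves t1 = 2 \<and> leaves t2 = 1)" using s p by auto
    then show ?thesis using Node ts Nil w1 leaves_one leaves_two by auto
  next
    case (Cons t3 r')
    have w3: "wf_tree t3" "wf_trees r'" using w1(3) Cons by auto
    have "leaves t1 + leaves t2 + leaves t3 + leaves_list r' = 3" using s Cons by simp
    with p(1,2) leaves_pos[OF w3(1)] leaves_list_len[OF w3(2)]
    have "leaves t1 = 1" "leaves t2 = 1" "leaves t3 = 1" "length r' = 0" by linarith+
    then show ?thesis using Node ts Cons w1 w3 leaves_one by auto
  qed
qed simp



theorem theorem7p1: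
  shows "\<not> (\<exists>s :: rat poly \<Rightarrow> ptree \<Rightarrow> rat.
            (\<forall>p\<in>L0. s p \<in> LamQTree)
          \<and> (\<forall>p\<in>L0. \<forall>q\<in>L0. s (p + q) = (\<lambda>u. s p u + s q u))
          \<and> (\<forall>a. \<forall>p\<in>L0. s (smult a p) = (\<lambda>u. a * s p u))
          \<and> (\<forall>p\<in>L0. \<forall>q\<in>L0. s (vf_br p q) = lam_br (s p) (s q))
          \<and> (\<forall>p\<in>L0. eps1 (s p) = p)
          \<and> s [:0, 1:] = basis Leaf)"
proof
  assume "\<exists>s :: rat poly \<Rightarrow> ptree \<Rightarrow> rat.
            (\<forall>p\<in>L0. s p \<in> LamQTree)
          \<and> (\<forall>p\<in>L0. \<forall>q\<in>L0. s (p + q) = (\<lambda>u. s p u + s q u))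
          \<and> (\<forall>a. \<forall>p\<in>L0. s (smult a p) = (\<lambda>u. a * s p u))
          \<and> (\<forall>p\<in>L0. \<forall>q\<in>L0. s (vf_br p q) = lam_br (s p) (s q))
          \<and> (\<forall>p\<in>L0. eps1 (s p) = p)
          \<and> s [:0, 1:] = basis Leaf"
  then obtain s :: "rat poly \<Rightarrow> ptree \<Rightarrow> rat" where
    H1: "\<forall>p\<in>L0. s p \<in> LamQTree" and
    H3: "\<forall>a. \<forall>p\<in>L0. s (smult a p) = (\<lambda>u. a * s p u)" and
    H4: "\<forall>p\<in>L0. \<forall>q\<in>L0. s (vf_br p q) = lam_br (s p) (s q)" and
    H5: "\<forall>p\<in>L0. eps1 (s p) = p" and
    H6: "s [:0, 1:] = basis Leaf" by blast
  define X where "X n = monom (1::rat) n" for n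
  have XL: "X n \<in> L0" if "1 \<le> n" for n using monom_L0[OF that] by (simp add: X_def)
  have X1: "X 1 = [:0,1:]" unfolding X_def by (rule monom_one_one)
  have XX: "vf_br (X m) (X n) = smult (of_nat n - of_nat m) (X (m + n - 1))"
    if "1 \<le> m" "1 \<le> n" for m n using vf_br_monom[OF that] by (simp add: X_def)
  have wf: "wf_tree u" if "1 \<le> n" "s (X n) u \<noteq> 0" for n u
    using H1 XL[OF that(1)] that(2) by (auto simp: LamQTree_def supp_def)
  have fin: "finite (supp (s (X n)))" if "1 \<le> n" for n
    using H1 XL[OF that] by (auto simp: LamQTree_def)
  have deg: "leaves u = n" if "1 \<le> n" "s (X n) u \<noteq> 0" for n u
  proof -
    have "s (vf_br (X 1) (X n)) = lam_br (basis Leaf) (s (X n))"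
      using H4 XL[of 1] XL[OF that(1)] H6 X1 by simp
    moreover have "vf_br (X 1) (X n) = smult (of_nat n - 1) (X n)"
      using XX[of 1 n] that by simp
    ultimately have "s (smult (of_nat n - 1) (X n)) u = lam_br (basis Leaf) (s (X n)) u" by simp
    then have "(of_nat n - 1) * s (X n) u = (of_nat (leaves u) - 1) * s (X n) u"
      using H3 XL[OF that(1)] lam_br_unit[of "s (X n)"] H1 by simp
    then have "(of_nat n :: rat) = of_nat (leaves u)" using that(2) by simp
    then show ?thesis by simp
  qed
  have co: "(\<Sum>t\<in>supp (s (X n)). s (X n) t) = 1" if "1 \<le> n" for n
  proof -
    have "coeff (eps1 (s (X n))) n = 1" using H5 XL[OF that] by (simp add: X_def)
    then show ?thesis unfolding coeff_eps1
      using deg[OF that] by (simp add: supp_def)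
  qed
  have s2: "s (X 2) = rep [(N2,1)]"
  proof
    fix u
    have sub: "supp (s (X 2)) \<subseteq> {N2}"
      using deg[of 2] wf[of 2] leaves_two by (auto simp: supp_def)
    have "(\<Sum>t\<in>supp (s (X 2)). s (X 2) t) = (\<Sum>t\<in>{N2}. s (X 2) t)"
      by (rule sum.mono_neutral_left) (use sub in \<open>auto simp: supp_def\<close>)
    then have "s (X 2) N2 = 1" using co[of 2] by simp
    moreover have "u \<noteq> N2 \<Longrightarrow> s (X 2) u = 0" using sub by (auto simp: supp_def)
    ultimately show "s (X 2) u = rep [(N2,1)] u" by auto
  qed
  define a where "a = s (X 3) TA"
  define b where "b = s (X 3) TB"
  define c where "c = s (X 3) TC"
  have sub3: "supp (s (X 3)) \<subseteq> {TA, TB, TC}"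
    using deg[of 3] wf[of 3] leaves_three by (auto simp: supp_def)
  have abc: "a + b + c = 1"
  proof -
    have "(\<Sum>t\<in>supp (s (X 3)). s (X 3) t) = (\<Sum>t\<in>{TA, TB, TC}. s (X 3) t)"
      by (rule sum.mono_neutral_left) (use sub3 in \<open>auto simp: supp_def\<close>)
    then show ?thesis using co[of 3] by (simp add: a_def b_def c_def)
  qed
  have s3: "s (X 3) = rep (xs3 a b c)"
  proof
    fix u
    have "u \<notin> {TA, TB, TC} \<Longrightarrow> s (X 3) u = 0" using sub3 by (auto simp: supp_def)
    then show "s (X 3) u = rep (xs3 a b c) u"
      by (cases "u = TA"; cases "u = TB"; cases "u = TC") (auto simp: a_def b_def c_def)
  qed
  define ys4 where "ys4 = fbr [(N2,1)] (xs3 a b c)"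
  have s4: "s (X 4) = rep ys4"
  proof -
    have "s (vf_br (X 2) (X 3)) = lam_br (s (X 2)) (s (X 3))" using H4 XL by simp
    moreover have "vf_br (X 2) (X 3) = X 4" using XX[of 2 3] by simp
    ultimately show ?thesis by (simp add: s2 s3 lam_br_rep ys4_def)
  qed
  define ys5 where "ys5 = hlf (fbr [(N2,1)] ys4)"
  have s5: "s (X 5) = rep ys5"
  proof
    fix u
    have "s (vf_br (X 2) (X 4)) = lam_br (s (X 2)) (s (X 4))" using H4 XL by simp
    moreover have "vf_br (X 2) (X 4) = smult 2 (X 5)" using XX[of 2 4] by simp
    ultimately have "s (smult 2 (X 5)) u = rep (fbr [(N2,1)] ys4) u" by (simp add: s2 s4 lam_br_rep)
    then have "2 * s (X 5) u = rep (fbr [(N2,1)] ys4) u" using H3 XL[of 5] by simp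
    then show "s (X 5) u = rep ys5 u" unfolding ys5_def hlf_def rep_scale by simp
  qed
  have key: "3 * rep (fbr (xs3 a b c) ys4) u = rep (fbr [(N2,1)] ys5) u" for u
  proof -
    have "s (vf_br (X 3) (X 4)) = lam_br (s (X 3)) (s (X 4))" using H4 XL by simp
    moreover have "vf_br (X 3) (X 4) = X 6" using XX[of 3 4] by simp
    ultimately have e1: "s (X 6) = rep (fbr (xs3 a b c) ys4)" by (simp add: s3 s4 lam_br_rep)
    have "s (vf_br (X 2) (X 5)) = lam_br (s (X 2)) (s (X 5))" using H4 XL by simp
    moreover have "vf_br (X 2) (X 5) = smult 3 (X 6)" using XX[of 2 5] by simp
    ultimately have "s (smult 3 (X 6)) u = rep (fbr [(N2,1)] ys5) u" by (simp add: s2 s5 lam_br_rep)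
    then show ?thesis using H3 XL[of 6] e1 by simp
  qed
  have "b = 0" by (rule compU1) (use key[of U1] in \<open>simp add: ys4_def ys5_def\<close>)
  moreover have "a = 0" by (rule compU2) (use key[of U2] in \<open>simp add: ys4_def ys5_def\<close>)
  moreover have "c = 0" by (rule compU3) (use key[of U3] in \<open>simp add: ys4_def ys5_def\<close>)
  ultimately show False using abc by simp
qed

end
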